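(* There exist a prime $p$, a field $\Bbbk$ of characteristic $p$, a polynomial ring $R=\Bbbk[x_1,\dots,x_n]$ and a $p$-Borel fixed monomial ideal $I\subseteq R$ with the following property: for every ordering $m_1,m_2,\dots,m_r$ of the minimal monomial generators of $I$ there is some $i$ with $2\le i\le r$ such that the mapping cone of the map induced by multiplication by $m_i$ from a minimal free resolution of $R/((m_1,\dots,m_{i-1}):m_i)$ to a minimal free resolution of $R/(m_1,\dots,m_{i-1})$ is not a minimal free resolution of $R/(m_1,\dots,m_i)$.
   Context: For primes $p$ and integers $s,t\ge0$ with base-$p$ expansions $s=\sum a_ip^i$, $t=\sum b_ip^i$ ($0\le a_i,b_i<p$), write $s\prec_p t$ if $a_i\le b_i$ for all $i$. A monomial ideal $I$ is $p$-Borel (fixed) if for every minimal generator $\mathbf m$ of $I$ and every $j$ with $x_j^t$ the highest power of $x_j$ dividing $\mathbf m$, the monomial $(x_i/x_j)^s\mathbf m$ lies in $I$ for all $i<j$ and all $s\prec_p t$. *)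

theory Defs
  imports Main "HOL-Library.Poly_Mapping" "HOL-Computational_Algebra.Primes"
begin

section \<open>Polynomial ring k[x_1,...,x_n] (variables indexed 0..n-1)\<close>

type_synonym monom = "nat \<Rightarrow>\<^sub>0 nat"
type_synonym 'k mpoly = "monom \<Rightarrow>\<^sub>0 'k"

definition X :: "monom \<Rightarrow> 'k::comm_ring_1 mpoly" where
  "X m = Poly_Mapping.single m 1"

definition monom_in :: "nat \<Rightarrow> monom \<Rightarrow> bool" where
  "monom_in n m \<longleftrightarrow> (\<forall>i\<in>Poly_Mapping.keys m. i < n)"

definition in_ring :: "nat \<Rightarrow> 'k::comm_ring_1 mpoly \<Rightarrow> bool" where
  "in_ring n f \<longleftrightarrow> (\<forall>m\<in>Poly_Mapping.keys f. monom_in n m)"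

definition mdeg :: "monom \<Rightarrow> nat" where
  "mdeg m = (\<Sum>i\<in>Poly_Mapping.keys m. Poly_Mapping.lookup m i)"

definition homogeneous :: "'k::comm_ring_1 mpoly \<Rightarrow> int \<Rightarrow> bool" where
  "homogeneous f e \<longleftrightarrow> (\<forall>m\<in>Poly_Mapping.keys f. int (mdeg m) = e)"

definition gen_ideal :: "nat \<Rightarrow> 'k::comm_ring_1 mpoly set \<Rightarrow> 'k mpoly set" where
  "gen_ideal n S = {f. \<exists>G c. finite G \<and> G \<subseteq> S \<and> (\<forall>g. in_ring n (c g)) \<and>
                         f = (\<Sum>g\<in>G. c g * g)}"

definition colon :: "nat \<Rightarrow> 'k::comm_ring_1 mpoly set \<Rightarrow> 'k mpoly \<Rightarrow> 'k mpoly set" where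
  "colon n J f = {g. in_ring n g \<and> g * f \<in> J}"

definition monomial_ideal :: "nat \<Rightarrow> 'k::comm_ring_1 mpoly set \<Rightarrow> bool" where
  "monomial_ideal n I \<longleftrightarrow> (\<exists>S. (\<forall>m\<in>S. monom_in n m) \<and> I = gen_ideal n (X ` S))"

definition mdvd :: "monom \<Rightarrow> monom \<Rightarrow> bool" where
  "mdvd a b \<longleftrightarrow> (\<forall>i. Poly_Mapping.lookup a i \<le> Poly_Mapping.lookup b i)"

definition mingens :: "'k::comm_ring_1 mpoly set \<Rightarrow> monom set" where
  "mingens I = {m. X m \<in> I \<and> (\<forall>m'. X m' \<in> I \<and> mdvd m' m \<longrightarrow> m' = m)}"

definition prec_p :: "nat \<Rightarrow> nat \<Rightarrow> nat \<Rightarrow> bool" where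
  "prec_p p s t \<longleftrightarrow> (\<forall>k. (s div p ^ k) mod p \<le> (t div p ^ k) mod p)"

text \<open>(x_i/x_j)^s * m (only used when s \<le> exponent of x_j in m).\<close>
definition shift_monom :: "nat \<Rightarrow> nat \<Rightarrow> nat \<Rightarrow> monom \<Rightarrow> monom" where
  "shift_monom i j s m = m + Poly_Mapping.single i s - Poly_Mapping.single j s"

definition p_Borel :: "nat \<Rightarrow> 'k::comm_ring_1 mpoly set \<Rightarrow> bool" where
  "p_Borel p I \<longleftrightarrow> (\<forall>m\<in>mingens I. \<forall>i j s. i < j \<longrightarrow> prec_p p s (Poly_Mapping.lookup m j) \<longrightarrow>
                      X (shift_monom i j s m) \<in> I)"

text \<open>A complex of finitely generated free R-modules is given by ranks b :: nat => nat
  (F_k = R^(b k)) and differential matrices d k : R^(b k) -> R^(b (k-1)), k >= 1,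
  with entries d k i j (i < b (k-1), j < b k).\<close>

type_synonym 'k mat = "nat \<Rightarrow> nat \<Rightarrow> 'k mpoly"

definition vecs :: "nat \<Rightarrow> nat \<Rightarrow> (nat \<Rightarrow> 'k::comm_ring_1 mpoly) set" where
  "vecs n r = {v. (\<forall>i. in_ring n (v i)) \<and> (\<forall>i\<ge>r. v i = 0)}"

definition mat_apply :: "'k::comm_ring_1 mat \<Rightarrow> nat \<Rightarrow> nat \<Rightarrow> (nat \<Rightarrow> 'k mpoly) \<Rightarrow> nat \<Rightarrow> 'k mpoly" where
  "mat_apply A rows cols v = (\<lambda>i. if i < rows then (\<Sum>j<cols. A i j * v j) else 0)"

definition free_res :: "nat \<Rightarrow> 'k::comm_ring_1 mpoly set \<Rightarrow> (nat \<Rightarrow> nat) \<Rightarrow> (nat \<Rightarrow> 'k mat) \<Rightarrow> bool" where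
  "free_res n J b d \<longleftrightarrow>
     b 0 = 1 \<and> (\<exists>L. \<forall>k>L. b k = 0) \<and>
     (\<forall>k\<ge>1. \<forall>i<b (k-1). \<forall>j<b k. in_ring n (d k i j)) \<and>
     J = {mat_apply (d 1) (b 0) (b 1) v 0 | v. v \<in> vecs n (b 1)} \<and>
     (\<forall>k\<ge>1. {v \<in> vecs n (b k). mat_apply (d k) (b (k-1)) (b k) v = (\<lambda>_. 0)} =
             mat_apply (d (Suc k)) (b k) (b (Suc k)) ` vecs n (b (Suc k)))"

definition graded_cx :: "(nat \<Rightarrow> nat) \<Rightarrow> (nat \<Rightarrow> 'k::comm_ring_1 mat) \<Rightarrow> bool" where
  "graded_cx b d \<longleftrightarrow> (\<exists>deg :: nat \<Rightarrow> nat \<Rightarrow> int.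
     \<forall>k\<ge>1. \<forall>i<b (k-1). \<forall>j<b k. homogeneous (d k i j) (deg k j - deg (k-1) i))"

text \<open>Minimal: all entries of the differentials lie in the homogeneous maximal ideal.\<close>
definition min_free_res :: "nat \<Rightarrow> 'k::comm_ring_1 mpoly set \<Rightarrow> (nat \<Rightarrow> nat) \<Rightarrow> (nat \<Rightarrow> 'k mat) \<Rightarrow> bool" where
  "min_free_res n J b d \<longleftrightarrow> free_res n J b d \<and> graded_cx b d \<and>
     (\<forall>k\<ge>1. \<forall>i<b (k-1). \<forall>j<b k. Poly_Mapping.lookup (d k i j) 0 = 0)"

text \<open>phi is a chain map F -> G (F = (bF,dF), G = (bG,dG)) lifting multiplication by f
  on F_0 = R -> G_0 = R (the comparison map induced by multiplication by f).\<close>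
definition lifts_mult :: "nat \<Rightarrow> 'k::comm_ring_1 mpoly \<Rightarrow> (nat \<Rightarrow> nat) \<Rightarrow> (nat \<Rightarrow> 'k mat) \<Rightarrow>
     (nat \<Rightarrow> nat) \<Rightarrow> (nat \<Rightarrow> 'k mat) \<Rightarrow> (nat \<Rightarrow> 'k mat) \<Rightarrow> bool" where
  "lifts_mult n f bF dF bG dG phi \<longleftrightarrow>
     phi 0 0 0 = f \<and>
     (\<forall>k. \<forall>i<bG k. \<forall>j<bF k. in_ring n (phi k i j)) \<and>
     (\<forall>k\<ge>1. \<forall>i<bG (k-1). \<forall>j<bF k.
        (\<Sum>l<bG k. dG k i l * phi k l j) = (\<Sum>l<bF (k-1). phi (k-1) i l * dF k l j))"

text \<open>Mapping cone of phi : F -> G: C_k = G_k \<oplus> F_(k-1); the first bG k basis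
  elements are those of G_k, the remaining ones those of F_(k-1).
  Differential: (g, f) |-> (dG g + phi f, - dF f).\<close>
definition cone_rank :: "(nat \<Rightarrow> nat) \<Rightarrow> (nat \<Rightarrow> nat) \<Rightarrow> nat \<Rightarrow> nat" where
  "cone_rank bF bG k = bG k + (if k = 0 then 0 else bF (k-1))"

definition cone_diff :: "(nat \<Rightarrow> nat) \<Rightarrow> (nat \<Rightarrow> 'k::comm_ring_1 mat) \<Rightarrow> (nat \<Rightarrow> nat) \<Rightarrow>
     (nat \<Rightarrow> 'k mat) \<Rightarrow> (nat \<Rightarrow> 'k mat) \<Rightarrow> nat \<Rightarrow> 'k mat" where
  "cone_diff bF dF bG dG phi k i j =
     (if i < bG (k-1) then
        (if j < bG k then dG k i j else phi (k-1) i (j - bG k))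
      else
        (if j < bG k then 0 else - dF (k-1) (i - bG (k-1)) (j - bG k)))"

end

theory Submission
  imports Defs
begin

lemma mdvd_ex: "mdvd m k \<Longrightarrow> k = m + (k - m)"
  unfolding mdvd_def by (intro poly_mapping_eqI) (simp add: lookup_add lookup_minus)

lemma add_mdvd: "mdvd m (m + q)"
  unfolding mdvd_def by (simp add: lookup_add)

lemma coef_X_mult:
  "Poly_Mapping.lookup (X m * (Q::'k::comm_ring_1 mpoly)) k =
     (if mdvd m k then Poly_Mapping.lookup Q (k - m) else 0)"
proof -
  have "Poly_Mapping.lookup (X m * Q) k =
     Sum_any (\<lambda>l. Poly_Mapping.lookup (X m) l * Sum_any (\<lambda>q. (Poly_Mapping.lookup Q q when k = l + q)))"
    by (rule lookup_mult)
  also have "\<dots> = Sum_any (\<lambda>q. (Poly_Mapping.lookup Q q when k = m + q))"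
  proof -
    have "(\<lambda>l. Poly_Mapping.lookup (X m) l * Sum_any (\<lambda>q. (Poly_Mapping.lookup Q q when k = l + q)))
        = (\<lambda>l. Sum_any (\<lambda>q. (Poly_Mapping.lookup Q q when k = l + q)) when l = m)"
      by (auto simp: X_def lookup_single when_def fun_eq_iff)
    then have "Sum_any (\<lambda>l. Poly_Mapping.lookup (X m) l * Sum_any (\<lambda>q. (Poly_Mapping.lookup Q q when k = l + q)))
        = Sum_any (\<lambda>l. Sum_any (\<lambda>q. (Poly_Mapping.lookup Q q when k = l + q)) when l = m)"
      by (rule arg_cong)
    then show ?thesis by simp
  qed
  also have "\<dots> = (if mdvd m k then Poly_Mapping.lookup Q (k - m) else 0)"
  proof (cases "mdvd m k")
    case True
    have "(\<lambda>q. Poly_Mapping.lookup Q q when k = m + q) = (\<lambda>q. Poly_Mapping.lookup Q q when q = k - m)"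
    proof
      fix q
      have "(k = m + q) = (q = k - m)"
        using mdvd_ex[OF True] by (metis add_diff_cancel_left')
      then show "(Poly_Mapping.lookup Q q when k = m + q) = (Poly_Mapping.lookup Q q when q = k - m)" by simp
    qed
    then have "Sum_any (\<lambda>q. Poly_Mapping.lookup Q q when k = m + q) = Sum_any (\<lambda>q. Poly_Mapping.lookup Q q when q = k - m)"
      by (rule arg_cong)
    then show ?thesis using True by simp
  next
    case False
    have "(\<lambda>q. Poly_Mapping.lookup Q q when k = m + q) = (\<lambda>q. 0)"
      using False add_mdvd by (auto simp: when_def fun_eq_iff)
    then have "Sum_any (\<lambda>q. (Poly_Mapping.lookup Q q when k = m + q)) = Sum_any (\<lambda>q::monom. (0::'k))"
      by (intro Sum_any.cong) (simp add: fun_eq_iff)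
    then show ?thesis using False by simp
  qed
  finally show ?thesis .
qed

lemma X_mult: "(X a :: 'k::comm_ring_1 mpoly) * X b = X (a + b)"
  by (simp add: X_def mult_single)

lemma const_mult:
  "Poly_Mapping.lookup ((p::'k::comm_ring_1 mpoly) * q) 0 = Poly_Mapping.lookup p 0 * Poly_Mapping.lookup q 0"
proof -
  have "Poly_Mapping.lookup (p * q) 0 =
     Sum_any (\<lambda>l. Poly_Mapping.lookup p l * Sum_any (\<lambda>r. (Poly_Mapping.lookup q r when (0::monom) = l + r)))"
    by (rule lookup_mult)
  also have "\<dots> = Sum_any (\<lambda>l. (Poly_Mapping.lookup p l * Poly_Mapping.lookup q 0 when l = 0))"
  proof -
    have e: "\<And>l r::monom. (0 = l + r) = (l = 0 \<and> r = 0)"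
      by (metis add_mdvd add.commute mdvd_def poly_mapping_eqI le_zero_eq lookup_zero add.right_neutral)
    have "\<And>l. Poly_Mapping.lookup p l * Sum_any (\<lambda>r. (Poly_Mapping.lookup q r when (0::monom) = l + r))
        = (Poly_Mapping.lookup p l * Poly_Mapping.lookup q 0 when l = 0)"
      by (auto simp: e when_def)
    then show ?thesis by simp
  qed
  finally show ?thesis by simp
qed

lemma coef_mult_constfree:
  assumes "Poly_Mapping.lookup (g::'k::comm_ring_1 mpoly) 0 = 0"
    and "\<And>w. mdvd w L \<Longrightarrow> w \<noteq> L \<Longrightarrow> Poly_Mapping.lookup Q w = 0"
  shows "Poly_Mapping.lookup (g * Q) L = 0"
proof -
  have "Poly_Mapping.lookup (g * Q) L =
     Sum_any (\<lambda>l. Poly_Mapping.lookup g l * Sum_any (\<lambda>r. (Poly_Mapping.lookup Q r when L = l + r)))"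
    by (rule lookup_mult)
  moreover have "Sum_any (\<lambda>l. Poly_Mapping.lookup g l * Sum_any (\<lambda>r. (Poly_Mapping.lookup Q r when L = l + r))) = Sum_any (\<lambda>l::monom. (0::'k))"
  proof (rule Sum_any.cong)
    fix l :: monom
    show "Poly_Mapping.lookup g l * Sum_any (\<lambda>r. (Poly_Mapping.lookup Q r when L = l + r)) = 0"
    proof (cases "l = 0")
      case True then show ?thesis using assms(1) by simp
    next
      case False
      have "(\<lambda>r. Poly_Mapping.lookup Q r when L = l + r) = (\<lambda>r. 0)"
      proof
        fix r
        show "(Poly_Mapping.lookup Q r when L = l + r) = 0"
        proof (cases "L = l + r")
          case True
          have "mdvd r L" using True add_mdvd[of r l] by (simp add: add.commute)
          moreover have "r \<noteq> L" using True False
            by (metis add_cancel_right_left)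
          ultimately show ?thesis using assms(2) by simp
        qed simp
      qed
      then have "Sum_any (\<lambda>r. (Poly_Mapping.lookup Q r when L = l + r)) = Sum_any (\<lambda>r::monom. (0::'k))"
        by (intro Sum_any.cong) (simp add: fun_eq_iff)
      then show ?thesis by simp
    qed
  qed
  ultimately show ?thesis by simp
qed

lemma monom_in_add: "monom_in n a \<Longrightarrow> monom_in n b \<Longrightarrow> monom_in n (a + b)"
  unfolding monom_in_def using keys_add[of a b] by blast

lemma monom_in_zero: "monom_in n 0"
  unfolding monom_in_def by simp

lemma monom_in_diff: "monom_in n a \<Longrightarrow> monom_in n (a - b)"
  unfolding monom_in_def by (auto simp: in_keys_iff lookup_minus)

lemma in_ring_0: "in_ring n 0"
  unfolding in_ring_def by simp

lemma in_ring_add: "in_ring n f \<Longrightarrow> in_ring n g \<Longrightarrow> in_ring n (f + g)"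
  unfolding in_ring_def using keys_add[of f g] by blast

lemma in_ring_uminus: "in_ring n (f::'k::comm_ring_1 mpoly) \<Longrightarrow> in_ring n (- f)"
  unfolding in_ring_def by simp

lemma in_ring_diff: "in_ring n (f::'k::comm_ring_1 mpoly) \<Longrightarrow> in_ring n g \<Longrightarrow> in_ring n (f - g)"
  using in_ring_add[of n f "- g"] in_ring_uminus[of n g] by simp

lemma in_ring_mult: "in_ring n (f::'k::comm_ring_1 mpoly) \<Longrightarrow> in_ring n g \<Longrightarrow> in_ring n (f * g)"
  unfolding in_ring_def using keys_mult[of f g] monom_in_add by blast

lemma in_ring_X: "monom_in n m \<Longrightarrow> in_ring n (X m :: 'k::comm_ring_1 mpoly)"
  unfolding in_ring_def X_def by simp

lemma in_ring_1: "in_ring n (1 :: 'k::comm_ring_1 mpoly)"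
  using in_ring_X[OF monom_in_zero, where 'k='k] by (simp add: X_def)

lemma in_ring_sum: "(\<And>i. i \<in> A \<Longrightarrow> in_ring n (f i :: 'k::comm_ring_1 mpoly)) \<Longrightarrow> in_ring n (sum f A)"
  by (induction A rule: infinite_finite_induct) (auto intro: in_ring_0 in_ring_add)

lemma X_in_gen_ideal:
  assumes "s \<in> S"
  shows "(X s :: 'k::comm_ring_1 mpoly) \<in> gen_ideal n (X ` S)"
  unfolding gen_ideal_def
  by (rule CollectI, rule exI[of _ "{X s}"], rule exI[of _ "\<lambda>_. 1"]) (simp add: assms in_ring_1)

lemma lookup_X: "Poly_Mapping.lookup (X m :: 'k::comm_ring_1 mpoly) k = (if k = m then 1 else 0)"
  by (simp add: X_def lookup_single)

lemma X_inj: "(X a :: 'k::{comm_ring_1} mpoly) = X b \<Longrightarrow> a = b"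
proof -
  assume "X a = (X b :: 'k mpoly)"
  then have "Poly_Mapping.lookup (X a :: 'k mpoly) a = Poly_Mapping.lookup (X b :: 'k mpoly) a" by simp
  then show "a = b" by (simp add: lookup_X split: if_splits)
qed

lemma X_mem_gen_ideal_dvd:
  assumes "(X m :: 'k::comm_ring_1 mpoly) \<in> gen_ideal n (X ` S)" "(1::'k) \<noteq> 0"
  shows "\<exists>s\<in>S. mdvd s m"
proof -
  obtain G c where G: "finite G" "G \<subseteq> (X ` S :: 'k mpoly set)" "(X m :: 'k mpoly) = (\<Sum>g\<in>G. c g * g)"
    using assms(1) unfolding gen_ideal_def by blast
  have "Poly_Mapping.lookup (X m :: 'k mpoly) m = 1" by (simp add: lookup_X)
  moreover have "Poly_Mapping.lookup (\<Sum>g\<in>G. c g * g) m = (\<Sum>g\<in>G. Poly_Mapping.lookup (c g * g) m)"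
    by (rule lookup_sum)
  ultimately have "(\<Sum>g\<in>G. Poly_Mapping.lookup (c g * g) m) \<noteq> 0" using assms(2) G(3) by metis
  then obtain g where g: "g \<in> G" "Poly_Mapping.lookup (c g * g) m \<noteq> 0"
    by (rule sum.not_neutral_contains_not_neutral)
  then obtain s where s: "s \<in> S" "g = X s" using G(2) by blast
  have "Poly_Mapping.lookup (X s * c g) m \<noteq> 0" using g s by (simp add: mult.commute)
  then have "mdvd s m" unfolding coef_X_mult by presburger
  then show ?thesis using s by blast
qed

lemma mdvd_in_gen_ideal:
  assumes "s \<in> S" "mdvd s m" "monom_in n m"
  shows "(X m :: 'k::comm_ring_1 mpoly) \<in> gen_ideal n (X ` S)"
proof -
  have e: "X m = (X (m - s) :: 'k mpoly) * X s"
    using mdvd_ex[OF assms(2)] by (simp add: X_mult add.commute)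
  show ?thesis unfolding gen_ideal_def
    by (rule CollectI, rule exI[of _ "{X s}"], rule exI[of _ "\<lambda>_. X (m - s)"])
       (simp add: assms e in_ring_X monom_in_diff)
qed

lemma gen_ideal_repr:
  assumes "f \<in> gen_ideal n ((X :: monom \<Rightarrow> 'k::comm_ring_1 mpoly) ` P)" "finite P"
  shows "\<exists>q. f = (\<Sum>c\<in>P. q c * X c)"
proof -
  obtain G c where G: "finite G" "G \<subseteq> X ` P" "f = (\<Sum>g\<in>G. c g * g)"
    using assms unfolding gen_ideal_def by blast
  define P' where "P' = {p \<in> P. X p \<in> G}"
  have inj: "inj_on (X :: monom \<Rightarrow> 'k mpoly) P'" by (meson X_inj inj_onI)
  have im: "X ` P' = G" using G(2) unfolding P'_def by blast
  have "f = (\<Sum>p\<in>P'. c (X p) * X p)"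
    using G(3) im sum.reindex[OF inj, of "\<lambda>g. c g * g"] by simp
  also have "\<dots> = (\<Sum>p\<in>P. if X p \<in> G then c (X p) * X p else 0)"
    unfolding P'_def using assms(2) by (simp add: sum.inter_filter)
  also have "\<dots> = (\<Sum>p\<in>P. (if X p \<in> G then c (X p) else 0) * X p)"
    by (rule sum.cong) auto
  finally show ?thesis by (rule exI[where x="\<lambda>p. if X p \<in> G then c (X p) else 0"])
qed

lemma mat_apply_lin:
  "mat_apply A r c (\<lambda>j. (p::'k::comm_ring_1 mpoly) * u j - q * v j) =
   (\<lambda>i. p * mat_apply A r c u i - q * mat_apply A r c v i)"
proof
  fix i
  show "mat_apply A r c (\<lambda>j. p * u j - q * v j) i = p * mat_apply A r c u i - q * mat_apply A r c v i"
    unfolding mat_apply_def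
    by (simp add: right_diff_distrib sum_subtractf sum_distrib_left mult.left_commute)
qed

lemma mat_apply_diff:
  "mat_apply A r c (\<lambda>j. (u j::'k::comm_ring_1 mpoly) - v j) =
   (\<lambda>i. mat_apply A r c u i - mat_apply A r c v i)"
proof
  fix i
  show "mat_apply A r c (\<lambda>j. u j - v j) i = mat_apply A r c u i - mat_apply A r c v i"
    unfolding mat_apply_def
    by (simp add: sum_subtractf right_diff_distrib)
qed

lemma sum_lessThan_zero_tail:
  assumes "m \<le> (N::nat)" "\<And>j. m \<le> j \<Longrightarrow> j < N \<Longrightarrow> h j = 0"
  shows "(\<Sum>j<N. h j) = (\<Sum>j<m. (h j :: 'a::comm_monoid_add))"
proof (rule sum.mono_neutral_right)
  show "finite {..<N}" by simp
  show "{..<m} \<subseteq> {..<N}" using assms by auto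
  show "\<forall>i\<in>{..<N} - {..<m}. h i = 0" using assms by auto
qed

lemma ev_vecs: "l < N \<Longrightarrow> (\<lambda>j. if j = l then 1 else 0) \<in> vecs n N"
  unfolding vecs_def by (auto simp: in_ring_1 in_ring_0)

lemma mat_apply_ev:
  "mat_apply A r c (\<lambda>j. if j = l then (1::'k::comm_ring_1 mpoly) else 0) i =
     (if i < r \<and> l < c then A i l else 0)"
proof -
  have "(\<Sum>j<c. A i j * (if j = l then (1::'k mpoly) else 0)) = (\<Sum>j<c. if j = l then A i j else 0)"
    by (rule sum.cong) auto
  also have "\<dots> = (if l < c then A i l else 0)" by (simp add: sum.delta')
  finally show ?thesis unfolding mat_apply_def by auto
qed

lemma lookup_X0: "m \<noteq> 0 \<Longrightarrow> Poly_Mapping.lookup (X m :: 'k::comm_ring_1 mpoly) 0 = 0"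
  by (simp add: lookup_X)

lemma key:
  fixes bF bG :: "nat \<Rightarrow> nat" and dF dG phi :: "nat \<Rightarrow> 'k::field mat"
    and P C :: "monom set"
  assumes G: "free_res n (gen_ideal n ((X::monom \<Rightarrow> 'k mpoly) ` P)) bG dG"
    and bF0: "bF 0 = 1" and phi0: "phi 0 0 0 = X f"
    and Cf: "free_res n I' (cone_rank bF bG) (cone_diff bF dF bG dG phi)"
    and Cm: "\<forall>k\<ge>1. \<forall>i<cone_rank bF bG (k-1). \<forall>j<cone_rank bF bG k.
               Poly_Mapping.lookup (cone_diff bF dF bG dG phi k i j) 0 = 0"
    and finP: "finite P" and aP: "a \<in> P" and bP: "b \<in> P"
    and inca: "\<forall>c\<in>P. mdvd c a \<longrightarrow> c = a" and incb: "\<forall>c\<in>P. mdvd c b \<longrightarrow> c = b"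
    and aC: "a \<in> C" and bC: "b \<notin> C"
    and clique: "\<forall>c\<in>P\<inter>C. \<forall>d\<in>P-C. \<forall>M. mdvd c M \<and> mdvd d M \<and> mdvd M L \<longrightarrow> M = L"
    and e1: "ua + a = va + f" and e2: "ub + b = vb + f"
    and e3: "wa + ua = ka" and e4: "wb + ub = kb"
    and e5: "ka + a = L" and e6: "kb + b = L"
    and wa0: "wa \<noteq> 0" and wb0: "wb \<noteq> 0"
    and mi: "monom_in n ua" "monom_in n va" "monom_in n wa" "monom_in n ub" "monom_in n vb" "monom_in n wb"
  shows False
proof -
  define b1 where "b1 = bG 1"
  define b2 where "b2 = bG 2"
  define J where "J = gen_ideal n ((X::monom \<Rightarrow> 'k mpoly) ` P)"
  define cr where "cr = cone_rank bF bG"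
  define cd where "cd = cone_diff bF dF bG dG phi"
  define g where "g = (\<lambda>l. dG 1 0 l)"
  have bG0: "bG 0 = 1" using G unfolding free_res_def by simp
  have cr0: "cr 0 = 1" using bG0 unfolding cr_def cone_rank_def by simp
  have cr1: "cr 1 = Suc b1" using bF0 unfolding cr_def cone_rank_def b1_def by simp
  have cr2: "cr 2 = b2 + bF 1" unfolding cr_def cone_rank_def b2_def by simp
  have Jim: "J = {mat_apply (dG 1) (bG 0) (bG 1) v 0 | v. v \<in> vecs n (bG 1)}"
    using G unfolding free_res_def J_def by blast
  have Gex: "\<And>k. k \<ge> 1 \<Longrightarrow> {v \<in> vecs n (bG k). mat_apply (dG k) (bG (k-1)) (bG k) v = (\<lambda>_. 0)} =
             mat_apply (dG (Suc k)) (bG k) (bG (Suc k)) ` vecs n (bG (Suc k))"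
    using G unfolding free_res_def by blast
  have Gex1: "{v \<in> vecs n b1. mat_apply (dG 1) 1 b1 v = (\<lambda>_. 0)} = mat_apply (dG 2) b1 b2 ` vecs n b2"
    using Gex[of 1] bG0 unfolding b1_def b2_def by (simp add: numeral_2_eq_2)
  have Cex: "\<And>k. k \<ge> 1 \<Longrightarrow> {v \<in> vecs n (cr k). mat_apply (cd k) (cr (k-1)) (cr k) v = (\<lambda>_. 0)} =
             mat_apply (cd (Suc k)) (cr k) (cr (Suc k)) ` vecs n (cr (Suc k))"
    using Cf unfolding free_res_def cr_def cd_def by blast
  have Cex1: "{v \<in> vecs n (cr 1). mat_apply (cd 1) 1 (cr 1) v = (\<lambda>_. 0)} = mat_apply (cd 2) (cr 1) (cr 2) ` vecs n (cr 2)"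
    using Cex[of 1] cr0 by (simp add: numeral_2_eq_2)
  have Cex2: "{v \<in> vecs n (cr 2). mat_apply (cd 2) (cr 1) (cr 2) v = (\<lambda>_. 0)} = mat_apply (cd 3) (cr 2) (cr 3) ` vecs n (cr 3)"
    using Cex[of 2] by (simp add: numeral_2_eq_2 numeral_3_eq_3)
  have Cm3: "\<And>i j. i < cr 2 \<Longrightarrow> j < cr 3 \<Longrightarrow> Poly_Mapping.lookup (cd 3 i j) 0 = 0"
    using Cm unfolding cr_def cd_def by (simp add: numeral_3_eq_3 numeral_2_eq_2)
  have dGin: "\<And>k i j. k \<ge> 1 \<Longrightarrow> i < bG (k-1) \<Longrightarrow> j < bG k \<Longrightarrow> in_ring n (dG k i j)"
    using G unfolding free_res_def by blast
  have gin: "\<And>l. l < b1 \<Longrightarrow> in_ring n (g l)" using dGin[of 1 0] bG0 unfolding g_def b1_def by simp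
  have gJ: "\<And>l. l < b1 \<Longrightarrow> g l \<in> J"
  proof -
    fix l assume l: "l < b1"
    have "mat_apply (dG 1) (bG 0) (bG 1) (\<lambda>j. if j = l then 1 else 0) 0 = g l"
      using l bG0 unfolding g_def b1_def by (simp add: mat_apply_ev)
    moreover have "(\<lambda>j. if j = l then (1::'k mpoly) else 0) \<in> vecs n (bG 1)"
      using l unfolding b1_def by (rule ev_vecs)
    ultimately show "g l \<in> J" unfolding Jim mem_Collect_eq
      by (intro exI[where x="\<lambda>j. if j = l then (1::'k mpoly) else 0"]) simp
  qed
  have "\<forall>l. \<exists>q. l < b1 \<longrightarrow> g l = (\<Sum>c\<in>P. q c * X c)"
    using gJ gen_ideal_repr[OF _ finP] unfolding J_def by metis
  from choice[OF this] obtain Q where Q: "\<And>l. l < b1 \<Longrightarrow> g l = (\<Sum>c\<in>P. Q l c * X c)" by blast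
  define PP where "PP = (\<lambda>c (u::nat \<Rightarrow> 'k mpoly). \<Sum>l<b1. Q l c * u l)"
  have swap: "\<And>u. (\<Sum>l<b1. g l * u l) = (\<Sum>c\<in>P. X c * PP c u)"
  proof -
    fix u :: "nat \<Rightarrow> 'k mpoly"
    have "(\<Sum>l<b1. g l * u l) = (\<Sum>l<b1. \<Sum>c\<in>P. X c * (Q l c * u l))"
      by (rule sum.cong) (simp_all add: Q sum_distrib_right sum_distrib_left mult_ac)
    also have "\<dots> = (\<Sum>c\<in>P. \<Sum>l<b1. X c * (Q l c * u l))" by (rule sum.swap)
    also have "\<dots> = (\<Sum>c\<in>P. X c * PP c u)" by (simp add: PP_def sum_distrib_left)
    finally show "(\<Sum>l<b1. g l * u l) = (\<Sum>c\<in>P. X c * PP c u)" .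
  qed
  have gen: "\<And>x. x \<in> P \<Longrightarrow> \<exists>\<alpha>\<in>vecs n b1. (\<Sum>l<b1. g l * \<alpha> l) = X x"
  proof -
    fix x assume "x \<in> P"
    then have "X x \<in> J" unfolding J_def by (rule X_in_gen_ideal)
    then obtain v where v: "v \<in> vecs n b1" "X x = mat_apply (dG 1) (bG 0) (bG 1) v 0"
      unfolding Jim b1_def by blast
    then show "\<exists>\<alpha>\<in>vecs n b1. (\<Sum>l<b1. g l * \<alpha> l) = X x"
      using bG0 unfolding mat_apply_def g_def b1_def by auto
  qed
  obtain \<alpha> where \<alpha>: "\<alpha> \<in> vecs n b1" "(\<Sum>l<b1. g l * \<alpha> l) = X a" using gen[OF aP] by blast
  obtain \<beta> where \<beta>: "\<beta> \<in> vecs n b1" "(\<Sum>l<b1. g l * \<beta> l) = X b" using gen[OF bP] by blast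
  have vin: "\<And>v N j. v \<in> vecs n N \<Longrightarrow> in_ring n (v j)" unfolding vecs_def by blast
  have vout: "\<And>v N j. v \<in> vecs n N \<Longrightarrow> j \<ge> N \<Longrightarrow> v j = 0" unfolding vecs_def by blast
  have cd10: "\<And>j. j < b1 \<Longrightarrow> cd 1 0 j = g j"
    unfolding cd_def cone_diff_def g_def b1_def using bG0 by simp
  have cd1b: "cd 1 0 b1 = X f"
    unfolding cd_def cone_diff_def b1_def using bG0 phi0 by simp
  have cd10': "\<And>j. j < b1 \<Longrightarrow> cd (Suc 0) 0 j = g j" using cd10 by simp
  have cd1b': "cd (Suc 0) 0 b1 = X f" using cd1b by simp
  define sg where "sg = (\<lambda>(u::monom) (v::monom) (\<alpha>::nat \<Rightarrow> 'k mpoly) j.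
      if j < b1 then X u * \<alpha> j else if j = b1 then - (X v :: 'k mpoly) else 0)"
  have sg_ker: "\<And>u v \<alpha> x. \<alpha> \<in> vecs n b1 \<Longrightarrow> monom_in n u \<Longrightarrow> monom_in n v \<Longrightarrow>
      (\<Sum>l<b1. g l * \<alpha> l) = X x \<Longrightarrow> u + x = v + f \<Longrightarrow>
      \<exists>\<tau>\<in>vecs n (cr 2). mat_apply (cd 2) (cr 1) (cr 2) \<tau> = sg u v \<alpha>"
  proof -
    fix u v x and \<alpha> :: "nat \<Rightarrow> 'k mpoly"
    assume \<alpha>v: "\<alpha> \<in> vecs n b1" and mu: "monom_in n u" and mv: "monom_in n v"
      and s: "(\<Sum>l<b1. g l * \<alpha> l) = X x" and e: "u + x = v + f"
    have "sg u v \<alpha> \<in> vecs n (cr 1)"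
      unfolding vecs_def sg_def cr1
      using vin[OF \<alpha>v] in_ring_X[OF mu] in_ring_X[OF mv]
      by (auto intro!: in_ring_mult in_ring_uminus simp: in_ring_0)
    moreover have "mat_apply (cd 1) 1 (cr 1) (sg u v \<alpha>) = (\<lambda>_. 0)"
    proof
      fix i
      show "mat_apply (cd 1) 1 (cr 1) (sg u v \<alpha>) i = 0"
      proof (cases "i = 0")
        case True
        have "(\<Sum>j<cr 1. cd 1 0 j * sg u v \<alpha> j) = (\<Sum>j<b1. cd 1 0 j * sg u v \<alpha> j) + cd 1 0 b1 * sg u v \<alpha> b1"
          unfolding cr1 by simp
        also have "\<dots> = (\<Sum>j<b1. g j * (X u * \<alpha> j)) + X f * (- X v)"
          by (simp add: cd10 cd1b cd10' cd1b' sg_def)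
        also have "\<dots> = X u * (\<Sum>j<b1. g j * \<alpha> j) - X f * X v"
          by (simp add: sum_distrib_left mult_ac)
        also have "\<dots> = 0" using e by (simp add: s X_mult add.commute)
        finally show ?thesis using True unfolding mat_apply_def by simp
      qed (simp add: mat_apply_def)
    qed
    ultimately have "sg u v \<alpha> \<in> mat_apply (cd 2) (cr 1) (cr 2) ` vecs n (cr 2)"
      using Cex1 by blast
    then show "\<exists>\<tau>\<in>vecs n (cr 2). mat_apply (cd 2) (cr 1) (cr 2) \<tau> = sg u v \<alpha>" by auto
  qed
  obtain \<tau>a where \<tau>a: "\<tau>a \<in> vecs n (cr 2)" "mat_apply (cd 2) (cr 1) (cr 2) \<tau>a = sg ua va \<alpha>"
    using sg_ker[OF \<alpha>(1) mi(1) mi(2) \<alpha>(2) e1] by blast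
  obtain \<tau>b where \<tau>b: "\<tau>b \<in> vecs n (cr 2)" "mat_apply (cd 2) (cr 1) (cr 2) \<tau>b = sg ub vb \<beta>"
    using sg_ker[OF \<beta>(1) mi(4) mi(5) \<beta>(2) e2] by blast
  define \<tau> where "\<tau> = (\<lambda>j. X wa * \<tau>a j - X wb * \<tau>b j)"
  define \<kappa> where "\<kappa> = (\<lambda>l. if l < b1 then X ka * \<alpha> l - X kb * \<beta> l else (0::'k mpoly))"
  have mka: "monom_in n ka" using e3 mi by (metis monom_in_add)
  have mkb: "monom_in n kb" using e4 mi by (metis monom_in_add)
  have wv: "wa + va = wb + vb"
  proof -
    have "wa + va + f = L" using e1 e3 e5 by (metis add.assoc)
    moreover have "wb + vb + f = L" using e2 e4 e6 by (metis add.assoc)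
    ultimately show ?thesis by (metis add_right_cancel)
  qed
  have \<tau>v: "\<tau> \<in> vecs n (cr 2)"
    using \<tau>a(1) \<tau>b(1) in_ring_X[OF mi(3)] in_ring_X[OF mi(6)] unfolding vecs_def \<tau>_def
    by (auto intro!: in_ring_diff in_ring_mult)
  have \<tau>im: "mat_apply (cd 2) (cr 1) (cr 2) \<tau> = \<kappa>"
  proof -
    have "mat_apply (cd 2) (cr 1) (cr 2) \<tau> = (\<lambda>i. X wa * sg ua va \<alpha> i - X wb * sg ub vb \<beta> i)"
      unfolding \<tau>_def mat_apply_lin \<tau>a(2) \<tau>b(2) ..
    also have "\<dots> = \<kappa>"
    proof
      fix i
      show "X wa * sg ua va \<alpha> i - X wb * sg ub vb \<beta> i = \<kappa> i"
      proof (cases "i < b1")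
        case True
        then show ?thesis unfolding sg_def \<kappa>_def
          by (simp add: mult.assoc[symmetric] X_mult e3 e4)
      next
        case False
        then show ?thesis unfolding sg_def \<kappa>_def
          by (simp add: X_mult wv)
      qed
    qed
    finally show ?thesis .
  qed
  have \<kappa>v: "\<kappa> \<in> vecs n b1"
    using vin[OF \<alpha>(1)] vin[OF \<beta>(1)] in_ring_X[OF mka] in_ring_X[OF mkb] unfolding vecs_def \<kappa>_def
    by (auto intro!: in_ring_diff in_ring_mult simp: in_ring_0)
  have \<kappa>ker: "mat_apply (dG 1) 1 b1 \<kappa> = (\<lambda>_. 0)"
  proof
    fix i
    show "mat_apply (dG 1) 1 b1 \<kappa> i = 0"
    proof (cases "i = 0")
      case True
      have "(\<Sum>l<b1. dG 1 0 l * \<kappa> l) = (\<Sum>l<b1. X ka * (g l * \<alpha> l) - X kb * (g l * \<beta> l))"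
        by (rule sum.cong) (simp_all add: \<kappa>_def g_def algebra_simps)
      also have "\<dots> = X ka * (\<Sum>l<b1. g l * \<alpha> l) - X kb * (\<Sum>l<b1. g l * \<beta> l)"
        by (simp add: sum_subtractf sum_distrib_left)
      also have "\<dots> = 0" by (simp add: \<alpha>(2) \<beta>(2) X_mult e5 e6)
      finally show ?thesis using True unfolding mat_apply_def by simp
    qed (simp add: mat_apply_def)
  qed
  obtain \<gamma> where \<gamma>: "\<gamma> \<in> vecs n b2" "\<kappa> = mat_apply (dG 2) b1 b2 \<gamma>"
    using \<kappa>v \<kappa>ker Gex1 by blast
  have b2le: "b2 \<le> cr 2" using cr2 by simp
  have \<gamma>v: "\<gamma> \<in> vecs n (cr 2)" using \<gamma>(1) b2le unfolding vecs_def by auto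
  have \<gamma>im: "mat_apply (cd 2) (cr 1) (cr 2) \<gamma> = \<kappa>"
  proof
    fix i
    show "mat_apply (cd 2) (cr 1) (cr 2) \<gamma> i = \<kappa> i"
    proof (cases "i < cr 1")
      case True
      have "(\<Sum>j<cr 2. cd 2 i j * \<gamma> j) = (\<Sum>j<b2. cd 2 i j * \<gamma> j)"
        by (rule sum_lessThan_zero_tail[OF b2le]) (simp add: vout[OF \<gamma>(1)])
      also have "\<dots> = (if i < b1 then (\<Sum>j<b2. dG 2 i j * \<gamma> j) else 0)"
        unfolding cd_def cone_diff_def b1_def b2_def by (auto intro: sum.cong)
      also have "\<dots> = \<kappa> i" unfolding \<gamma>(2) mat_apply_def by simp
      finally show ?thesis using True unfolding mat_apply_def by simp
    next
      case False
      then show ?thesis unfolding mat_apply_def \<kappa>_def cr1 by simp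
    qed
  qed
  define \<delta> where "\<delta> = (\<lambda>j. \<gamma> j - \<tau> j)"
  have \<delta>v: "\<delta> \<in> vecs n (cr 2)" using \<gamma>v \<tau>v unfolding vecs_def \<delta>_def by (auto intro: in_ring_diff)
  have \<delta>ker: "mat_apply (cd 2) (cr 1) (cr 2) \<delta> = (\<lambda>_. 0)"
    unfolding \<delta>_def mat_apply_diff \<gamma>im \<tau>im by simp
  obtain z where z: "z \<in> vecs n (cr 3)" "\<delta> = mat_apply (cd 3) (cr 2) (cr 3) z"
    using \<delta>v \<delta>ker Cex2 by blast
  have \<gamma>0: "\<And>j. j < b2 \<Longrightarrow> Poly_Mapping.lookup (\<gamma> j) 0 = 0"
  proof -
    fix j assume j: "j < b2"
    then have j2: "j < cr 2" using b2le by simp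
    have "Poly_Mapping.lookup (\<delta> j) 0 = (\<Sum>l<cr 3. Poly_Mapping.lookup (cd 3 j l * z l) 0)"
      using j2 unfolding z(2) mat_apply_def by (simp add: lookup_sum)
    also have "\<dots> = 0" using Cm3[OF j2] by (simp add: const_mult)
    finally have d0: "Poly_Mapping.lookup (\<delta> j) 0 = 0" .
    have t0: "Poly_Mapping.lookup (\<tau> j) 0 = 0"
      unfolding \<tau>_def by (simp add: lookup_minus const_mult lookup_X0 wa0 wb0)
    show "Poly_Mapping.lookup (\<gamma> j) 0 = 0" using d0 t0 unfolding \<delta>_def by (simp add: lookup_minus)
  qed
  define SS where "SS = (\<lambda>c j. \<Sum>l<b1. Q l c * dG 2 l j)"
  have syz: "\<And>j. j < b2 \<Longrightarrow> (\<Sum>c\<in>P. X c * SS c j) = 0"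
  proof -
    fix j assume j: "j < b2"
    have ej: "(\<lambda>i. if i = j then (1::'k mpoly) else 0) \<in> vecs n b2" using j by (rule ev_vecs)
    define s where "s = mat_apply (dG 2) b1 b2 (\<lambda>i. if i = j then (1::'k mpoly) else 0)"
    have "s \<in> {v \<in> vecs n b1. mat_apply (dG 1) 1 b1 v = (\<lambda>_. 0)}"
      unfolding Gex1 s_def using ej by blast
    then have "mat_apply (dG 1) 1 b1 s 0 = 0" by simp
    then have "(\<Sum>l<b1. g l * s l) = 0" unfolding mat_apply_def g_def by simp
    moreover have "(\<Sum>l<b1. g l * s l) = (\<Sum>l<b1. g l * dG 2 l j)"
      by (rule sum.cong) (simp_all add: s_def mat_apply_ev j)
    ultimately have "(\<Sum>l<b1. g l * dG 2 l j) = 0" by simp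
    then show "(\<Sum>c\<in>P. X c * SS c j) = 0"
      using swap[of "\<lambda>l. dG 2 l j"] unfolding PP_def SS_def by simp
  qed
  have PPk1: "\<And>c. PP c \<kappa> = X ka * PP c \<alpha> - X kb * PP c \<beta>"
    unfolding PP_def \<kappa>_def
    by (simp add: sum_subtractf sum_distrib_left algebra_simps)
  have PPk2: "\<And>c. PP c \<kappa> = (\<Sum>j<b2. \<gamma> j * SS c j)"
  proof -
    fix c
    have "PP c \<kappa> = (\<Sum>l<b1. \<Sum>j<b2. \<gamma> j * (Q l c * dG 2 l j))"
      unfolding PP_def \<gamma>(2) mat_apply_def
      by (rule sum.cong) (simp_all add: sum_distrib_left mult_ac)
    also have "\<dots> = (\<Sum>j<b2. \<Sum>l<b1. \<gamma> j * (Q l c * dG 2 l j))" by (rule sum.swap)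
    also have "\<dots> = (\<Sum>j<b2. \<gamma> j * SS c j)" unfolding SS_def by (simp add: sum_distrib_left)
    finally show "PP c \<kappa> = (\<Sum>j<b2. \<gamma> j * SS c j)" .
  qed
  have finPC: "finite (P \<inter> C)" using finP by simp
  have kaL: "mdvd ka L" "L - ka = a" using e5 add_mdvd[of ka a] by auto
  have kbL: "mdvd kb L" "L - kb = b" using e6 add_mdvd[of kb b] by auto
  define LF where "LF = (\<Sum>c\<in>P\<inter>C. Poly_Mapping.lookup (X c * PP c \<kappa>) L)"
  have termA: "\<And>c. Poly_Mapping.lookup (X c * PP c \<kappa>) L =
      Poly_Mapping.lookup (X c * PP c \<alpha>) a - Poly_Mapping.lookup (X c * PP c \<beta>) b"
  proof -
    fix c
    have "X c * PP c \<kappa> = X ka * (X c * PP c \<alpha>) - X kb * (X c * PP c \<beta>)"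
      unfolding PPk1 by (simp add: algebra_simps)
    then show "Poly_Mapping.lookup (X c * PP c \<kappa>) L =
      Poly_Mapping.lookup (X c * PP c \<alpha>) a - Poly_Mapping.lookup (X c * PP c \<beta>) b"
      by (simp add: lookup_minus coef_X_mult kaL kbL)
  qed
  have ta: "\<And>c. c \<in> P \<Longrightarrow> Poly_Mapping.lookup (X c * PP c \<alpha>) a =
      (if c = a then Poly_Mapping.lookup (X a * PP a \<alpha>) a else 0)"
    using inca by (auto simp: coef_X_mult)
  have tb: "\<And>c. c \<in> P \<inter> C \<Longrightarrow> Poly_Mapping.lookup (X c * PP c \<beta>) b = 0"
    using incb bC by (auto simp: coef_X_mult)
  have sA: "(\<Sum>c\<in>P\<inter>C. Poly_Mapping.lookup (X c * PP c \<alpha>) a) = Poly_Mapping.lookup (X a * PP a \<alpha>) a"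
  proof -
    have "(\<Sum>c\<in>P\<inter>C. Poly_Mapping.lookup (X c * PP c \<alpha>) a) =
        (\<Sum>c\<in>P\<inter>C. if c = a then Poly_Mapping.lookup (X a * PP a \<alpha>) a else 0)"
      by (rule sum.cong) (simp_all add: ta)
    also have "\<dots> = Poly_Mapping.lookup (X a * PP a \<alpha>) a" using aP aC finPC by (simp add: sum.delta')
    finally show ?thesis .
  qed
  have sP: "(\<Sum>c\<in>P. Poly_Mapping.lookup (X c * PP c \<alpha>) a) = Poly_Mapping.lookup (X a * PP a \<alpha>) a"
  proof -
    have "(\<Sum>c\<in>P. Poly_Mapping.lookup (X c * PP c \<alpha>) a) =
        (\<Sum>c\<in>P. if c = a then Poly_Mapping.lookup (X a * PP a \<alpha>) a else 0)"
      by (rule sum.cong) (simp_all add: ta)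
    also have "\<dots> = Poly_Mapping.lookup (X a * PP a \<alpha>) a" using aP finP by (simp add: sum.delta')
    finally show ?thesis .
  qed
  have one: "(\<Sum>c\<in>P. Poly_Mapping.lookup (X c * PP c \<alpha>) a) = 1"
  proof -
    have "(\<Sum>c\<in>P. Poly_Mapping.lookup (X c * PP c \<alpha>) a) = Poly_Mapping.lookup (\<Sum>c\<in>P. X c * PP c \<alpha>) a"
      by (simp add: lookup_sum)
    also have "\<dots> = Poly_Mapping.lookup (X a :: 'k mpoly) a" using swap[of \<alpha>] \<alpha>(2) by simp
    also have "\<dots> = 1" by (simp add: lookup_X)
    finally show ?thesis .
  qed
  have LF1: "LF = 1"
  proof -
    have "LF = (\<Sum>c\<in>P\<inter>C. Poly_Mapping.lookup (X c * PP c \<alpha>) a) - (\<Sum>c\<in>P\<inter>C. Poly_Mapping.lookup (X c * PP c \<beta>) b)"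
      unfolding LF_def termA by (simp add: sum_subtractf)
    also have "(\<Sum>c\<in>P\<inter>C. Poly_Mapping.lookup (X c * PP c \<beta>) b) = 0" using tb by simp
    finally show ?thesis using sA sP one by simp
  qed
  have Qz: "\<And>j w. j < b2 \<Longrightarrow> mdvd w L \<Longrightarrow> w \<noteq> L \<Longrightarrow>
      Poly_Mapping.lookup (\<Sum>c\<in>P\<inter>C. X c * SS c j) w = 0"
  proof -
    fix j w assume j: "j < b2" and wL: "mdvd w L" "w \<noteq> L"
    have eq: "Poly_Mapping.lookup (\<Sum>c\<in>P\<inter>C. X c * SS c j) w = (\<Sum>c\<in>P\<inter>C. Poly_Mapping.lookup (X c * SS c j) w)"
      by (simp add: lookup_sum)
    show "Poly_Mapping.lookup (\<Sum>c\<in>P\<inter>C. X c * SS c j) w = 0"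
    proof (cases "\<exists>d\<in>P-C. mdvd d w")
      case True
      then obtain d where d: "d \<in> P - C" "mdvd d w" by blast
      have "\<And>c. c \<in> P \<inter> C \<Longrightarrow> \<not> mdvd c w" using clique d wL by blast
      then show ?thesis unfolding eq by (simp add: coef_X_mult)
    next
      case False
      have "(\<Sum>c\<in>P\<inter>C. Poly_Mapping.lookup (X c * SS c j) w) = (\<Sum>c\<in>P. Poly_Mapping.lookup (X c * SS c j) w)"
      proof (rule sum.mono_neutral_left)
        show "finite P" by (rule finP)
        show "P \<inter> C \<subseteq> P" by blast
        show "\<forall>c\<in>P - P \<inter> C. Poly_Mapping.lookup (X c * SS c j) w = 0"
          using False by (auto simp: coef_X_mult)
      qed
      also have "\<dots> = Poly_Mapping.lookup (\<Sum>c\<in>P. X c * SS c j) w" by (simp add: lookup_sum)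
      also have "\<dots> = 0" using syz[OF j] by simp
      finally show ?thesis unfolding eq .
    qed
  qed
  have LF0: "LF = 0"
  proof -
    have "LF = (\<Sum>c\<in>P\<inter>C. \<Sum>j<b2. Poly_Mapping.lookup (\<gamma> j * (X c * SS c j)) L)"
      unfolding LF_def PPk2 by (simp add: sum_distrib_left lookup_sum mult_ac)
    also have "\<dots> = (\<Sum>j<b2. \<Sum>c\<in>P\<inter>C. Poly_Mapping.lookup (\<gamma> j * (X c * SS c j)) L)"
      by (rule sum.swap)
    also have "\<dots> = (\<Sum>j<b2. Poly_Mapping.lookup (\<gamma> j * (\<Sum>c\<in>P\<inter>C. X c * SS c j)) L)"
      by (simp add: sum_distrib_left lookup_sum)
    also have "\<dots> = 0"
    proof (rule sum.neutral, rule ballI)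
      fix j assume "j \<in> {..<b2}"
      then have j: "j < b2" by simp
      show "Poly_Mapping.lookup (\<gamma> j * (\<Sum>c\<in>P\<inter>C. X c * SS c j)) L = 0"
        by (rule coef_mult_constfree[OF \<gamma>0[OF j]]) (rule Qz[OF j])
    qed
    finally show ?thesis .
  qed
  show False using LF0 LF1 by simp
qed

type_synonym triple = "nat \<times> nat \<times> nat"

definition mon :: "triple \<Rightarrow> monom" where
  "mon t = (case t of (a, b, c) \<Rightarrow> Poly_Mapping.single 0 a + Poly_Mapping.single 1 b + Poly_Mapping.single 2 c)"

definition tdvd :: "triple \<Rightarrow> triple \<Rightarrow> bool" where
  "tdvd t t' = (case t of (a, b, c) \<Rightarrow> case t' of (a', b', c') \<Rightarrow> a \<le> a' \<and> b \<le> b' \<and> c \<le> c')"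

lemma lookup_mon: "Poly_Mapping.lookup (mon (a, b, c)) k =
    (if k = 0 then a else if k = 1 then b else if k = 2 then c else 0)"
  unfolding mon_def by (simp add: lookup_add lookup_single)

lemma mdvd_mon: "mdvd (mon (a, b, c)) (mon (a', b', c')) \<longleftrightarrow> a \<le> a' \<and> b \<le> b' \<and> c \<le> c'"
proof
  assume "mdvd (mon (a, b, c)) (mon (a', b', c'))"
  then have "\<And>k. Poly_Mapping.lookup (mon (a, b, c)) k \<le> Poly_Mapping.lookup (mon (a', b', c')) k"
    unfolding mdvd_def by blast
  from this[of 0] this[of 1] this[of 2] show "a \<le> a' \<and> b \<le> b' \<and> c \<le> c'" by (simp add: lookup_mon)
next
  assume "a \<le> a' \<and> b \<le> b' \<and> c \<le> c'"
  then show "mdvd (mon (a, b, c)) (mon (a', b', c'))" unfolding mdvd_def by (simp add: lookup_mon)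
qed

lemma mdvd_mon_t: "mdvd (mon t) (mon t') \<longleftrightarrow> tdvd t t'"
  by (cases t; cases t') (simp add: mdvd_mon tdvd_def)

lemma mon_eq: "mon (a, b, c) = mon (a', b', c') \<longleftrightarrow> a = a' \<and> b = b' \<and> c = c'"
proof
  assume h: "mon (a, b, c) = mon (a', b', c')"
  have "\<And>k. Poly_Mapping.lookup (mon (a, b, c)) k = Poly_Mapping.lookup (mon (a', b', c')) k"
    using h by simp
  from this[of 0] this[of 1] this[of 2] show "a = a' \<and> b = b' \<and> c = c'" by (simp add: lookup_mon)
qed simp

lemma mon_inj: "mon t = mon t' \<longleftrightarrow> t = t'"
  by (cases t; cases t') (simp add: mon_eq)

lemma mon_add: "mon (a, b, c) + mon (a', b', c') = mon (a + a', b + b', c + c')"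
  by (rule poly_mapping_eqI) (simp add: lookup_add lookup_mon)

lemma mon_zero_iff: "mon (a, b, c) = 0 \<longleftrightarrow> a = 0 \<and> b = 0 \<and> c = 0"
proof -
  have "(0::monom) = mon (0, 0, 0)" by (rule poly_mapping_eqI) (simp add: lookup_mon)
  then show ?thesis using mon_eq[of a b c 0 0 0] by metis
qed

lemma monom_in_mon: "monom_in 3 (mon t)"
  unfolding monom_in_def by (cases t) (auto simp: lookup_mon in_keys_iff split: if_splits)

lemma mdvd_trans: "mdvd a b \<Longrightarrow> mdvd b c \<Longrightarrow> mdvd a c"
  unfolding mdvd_def using le_trans by blast

lemma mdvd_antisym: "mdvd a b \<Longrightarrow> mdvd b a \<Longrightarrow> a = b"
  unfolding mdvd_def by (intro poly_mapping_eqI) (meson antisym)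

lemma clique_mon:
  assumes "mdvd (mon (a, b, c)) M" "mdvd (mon (a', b', c')) M" "mdvd M (mon (max a a', max b b', max c c'))"
  shows "M = mon (max a a', max b b', max c c')"
proof (rule poly_mapping_eqI)
  fix k
  have 1: "Poly_Mapping.lookup (mon (a, b, c)) k \<le> Poly_Mapping.lookup M k" using assms(1) unfolding mdvd_def by blast
  have 2: "Poly_Mapping.lookup (mon (a', b', c')) k \<le> Poly_Mapping.lookup M k" using assms(2) unfolding mdvd_def by blast
  have 3: "Poly_Mapping.lookup M k \<le> Poly_Mapping.lookup (mon (max a a', max b b', max c c')) k" using assms(3) unfolding mdvd_def by blast
  show "Poly_Mapping.lookup M k = Poly_Mapping.lookup (mon (max a a', max b b', max c c')) k"
    using 1 2 3 by (simp add: lookup_mon split: if_splits)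
qed


definition tmax :: "triple \<Rightarrow> triple \<Rightarrow> triple" where
  "tmax t t' = (case t of (a, b, c) \<Rightarrow> case t' of (a', b', c') \<Rightarrow> (max a a', max b b', max c c'))"

definition G8T :: "triple set" where
  "G8T = {(0,1,2),(0,2,1),(0,3,0),(1,0,2),(1,2,0),(2,0,1),(2,1,0),(3,0,0)}"

lemma case_lemma:
  fixes P :: "monom set" and CT :: "triple set" and I2 :: "'k::field mpoly set"
  assumes PS: "P \<subseteq> mon ` (G8T - {ft})" and finP: "finite P"
    and aP: "mon at \<in> P" and bP: "mon bt \<in> P"
    and inca: "\<forall>t\<in>G8T. tdvd t at \<longrightarrow> t = at" and incb: "\<forall>t\<in>G8T. tdvd t bt \<longrightarrow> t = bt"
    and aC: "at \<in> CT" and bC: "bt \<notin> CT"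
    and clq: "\<forall>t\<in>G8T - {ft}. \<forall>t'\<in>G8T - {ft}. t \<in> CT \<and> t' \<notin> CT \<and> tdvd t Lt \<and> tdvd t' Lt \<longrightarrow> Lt = tmax t t'"
    and e1: "mon uat + mon at = mon vat + mon ft" and e2: "mon ubt + mon bt = mon vbt + mon ft"
    and e3: "mon wat + mon uat = mon kat" and e4: "mon wbt + mon ubt = mon kbt"
    and e5: "mon kat + mon at = mon Lt" and e6: "mon kbt + mon bt = mon Lt"
    and wa0: "mon wat \<noteq> 0" and wb0: "mon wbt \<noteq> 0"
  shows "\<forall>bF dF bG dG phi.
              min_free_res 3 (colon 3 (gen_ideal 3 ((X :: monom \<Rightarrow> 'k mpoly) ` P)) (X (mon ft) :: 'k mpoly)) bF dF \<and>
              min_free_res 3 (gen_ideal 3 ((X :: monom \<Rightarrow> 'k mpoly) ` P)) bG dG \<and>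
              lifts_mult 3 (X (mon ft) :: 'k mpoly) bF dF bG dG phi \<longrightarrow>
              \<not> min_free_res 3 I2 (cone_rank bF bG) (cone_diff bF dF bG dG phi)"
proof (intro allI impI notI)
  fix bF bG :: "nat \<Rightarrow> nat" and dF dG phi :: "nat \<Rightarrow> 'k mat"
  assume h: "min_free_res 3 (colon 3 (gen_ideal 3 ((X :: monom \<Rightarrow> 'k mpoly) ` P)) (X (mon ft) :: 'k mpoly)) bF dF \<and>
              min_free_res 3 (gen_ideal 3 ((X :: monom \<Rightarrow> 'k mpoly) ` P)) bG dG \<and>
              lifts_mult 3 (X (mon ft) :: 'k mpoly) bF dF bG dG phi"
    and hc: "min_free_res 3 I2 (cone_rank bF bG) (cone_diff bF dF bG dG phi)"
  have G: "free_res 3 (gen_ideal 3 ((X::monom \<Rightarrow> 'k mpoly) ` P)) bG dG"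
    using h unfolding min_free_res_def by blast
  have bF0: "bF 0 = 1" using h unfolding min_free_res_def free_res_def by blast
  have phi0: "phi 0 0 0 = X (mon ft)" using h unfolding lifts_mult_def by blast
  have Cf: "free_res 3 I2 (cone_rank bF bG) (cone_diff bF dF bG dG phi)"
    using hc unfolding min_free_res_def by blast
  have Cm: "\<forall>k\<ge>1. \<forall>i<cone_rank bF bG (k-1). \<forall>j<cone_rank bF bG k.
               Poly_Mapping.lookup (cone_diff bF dF bG dG phi k i j) 0 = 0"
    using hc unfolding min_free_res_def by blast
  have Pm: "\<And>c. c \<in> P \<Longrightarrow> \<exists>t. t \<in> G8T - {ft} \<and> c = mon t" using PS by blast
  have inca': "\<forall>c\<in>P. mdvd c (mon at) \<longrightarrow> c = mon at"
  proof (intro ballI impI)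
    fix c assume c: "c \<in> P" and m: "mdvd c (mon at)"
    obtain t where t: "t \<in> G8T - {ft}" "c = mon t" using Pm[OF c] by blast
    have "tdvd t at" using m t(2) mdvd_mon_t by simp
    then show "c = mon at" using inca t by blast
  qed
  have incb': "\<forall>c\<in>P. mdvd c (mon bt) \<longrightarrow> c = mon bt"
  proof (intro ballI impI)
    fix c assume c: "c \<in> P" and m: "mdvd c (mon bt)"
    obtain t where t: "t \<in> G8T - {ft}" "c = mon t" using Pm[OF c] by blast
    have "tdvd t bt" using m t(2) mdvd_mon_t by simp
    then show "c = mon bt" using incb t by blast
  qed
  have clique: "\<forall>c\<in>P \<inter> mon ` CT. \<forall>d\<in>P - mon ` CT. \<forall>M. mdvd c M \<and> mdvd d M \<and> mdvd M (mon Lt) \<longrightarrow> M = mon Lt"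
  proof (intro ballI allI impI)
    fix c d M assume c: "c \<in> P \<inter> mon ` CT" and d: "d \<in> P - mon ` CT"
      and M: "mdvd c M \<and> mdvd d M \<and> mdvd M (mon Lt)"
    obtain t where t: "t \<in> G8T - {ft}" "c = mon t" using Pm c by blast
    obtain t' where t': "t' \<in> G8T - {ft}" "d = mon t'" using Pm d by blast
    have tC: "t \<in> CT" using c t(2) by (auto simp: mon_inj)
    have t'C: "t' \<notin> CT" using d t'(2) by blast
    have "mdvd c (mon Lt)" using mdvd_trans[of c M "mon Lt"] M by blast
    then have "tdvd t Lt" using t(2) mdvd_mon_t by simp
    moreover have "mdvd d (mon Lt)" using mdvd_trans[of d M "mon Lt"] M by blast
    then have "tdvd t' Lt" using t'(2) mdvd_mon_t by simp
    ultimately have L: "Lt = tmax t t'" using clq t(1) t'(1) tC t'C by blast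
    obtain a1 b1 c1 where T: "t = (a1, b1, c1)" by (cases t) auto
    obtain a2 b2 c2 where T': "t' = (a2, b2, c2)" by (cases t') auto
    show "M = mon Lt" using clique_mon[of a1 b1 c1 M a2 b2 c2] M t(2) t'(2) L T T'
      by (simp add: tmax_def)
  qed
  show False
    by (rule key[OF G bF0 phi0 Cf Cm finP aP bP inca' incb' _ _ clique e1 e2 e3 e4 e5 e6 wa0 wb0
          monom_in_mon monom_in_mon monom_in_mon monom_in_mon monom_in_mon monom_in_mon])
       (use aC bC in \<open>auto simp: mon_inj\<close>)
qed

lemma mingens_G8:
  "mingens (gen_ideal 3 ((X :: monom \<Rightarrow> 'k::field mpoly) ` mon ` G8T)) = mon ` G8T"
proof -
  let ?I = "gen_ideal 3 ((X :: monom \<Rightarrow> 'k mpoly) ` mon ` G8T)"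
  have anti: "\<And>t t'. t \<in> G8T \<Longrightarrow> t' \<in> G8T \<Longrightarrow> tdvd t t' \<Longrightarrow> t = t'"
    unfolding G8T_def tdvd_def by auto
  have dv: "\<And>m. X m \<in> ?I \<Longrightarrow> \<exists>s\<in>mon ` G8T. mdvd s m"
    by (rule X_mem_gen_ideal_dvd) simp_all
  have mem: "\<And>m. m \<in> mon ` G8T \<Longrightarrow> X m \<in> ?I" by (rule X_in_gen_ideal)
  show ?thesis
  proof
    show "mingens ?I \<subseteq> mon ` G8T"
    proof
      fix m assume m: "m \<in> mingens ?I"
      then have Xm: "X m \<in> ?I" and mn: "\<And>m'. X m' \<in> ?I \<Longrightarrow> mdvd m' m \<Longrightarrow> m' = m"
        unfolding mingens_def by auto
      obtain s where s: "s \<in> mon ` G8T" "mdvd s m" using dv[OF Xm] by blast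
      have "s = m" using mn[OF mem[OF s(1)] s(2)] .
      then show "m \<in> mon ` G8T" using s(1) by simp
    qed
  next
    show "mon ` G8T \<subseteq> mingens ?I"
    proof
      fix m assume m: "m \<in> mon ` G8T"
      have "\<And>m'. X m' \<in> ?I \<Longrightarrow> mdvd m' m \<Longrightarrow> m' = m"
      proof -
        fix m' assume Xm': "X m' \<in> ?I" and d: "mdvd m' m"
        obtain s where s: "s \<in> mon ` G8T" "mdvd s m'" using dv[OF Xm'] by blast
        have sm: "mdvd s m" using mdvd_trans[OF s(2) d] .
        obtain t where t: "t \<in> G8T" "m = mon t" using m by blast
        obtain t' where t': "t' \<in> G8T" "s = mon t'" using s(1) by blast
        have "t' = t" using anti[OF t'(1) t(1)] sm t t' by (simp add: mdvd_mon_t)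
        then have "s = m" using t t' by simp
        then show "m' = m" using mdvd_antisym[OF d] s(2) by simp
      qed
      then show "m \<in> mingens ?I" unfolding mingens_def using mem[OF m] by blast
    qed
  qed
qed

lemma prec_le:
  assumes "2 \<le> p" "prec_p p s t"
  shows "s \<le> t"
  using assms(2)
proof (induction s arbitrary: t rule: less_induct)
  case (less s t)
  show ?case
  proof (cases "s = 0")
    case False
    have pd: "prec_p p (s div p) (t div p)"
      unfolding prec_p_def
    proof
      fix k
      have "(s div p ^ Suc k) mod p \<le> (t div p ^ Suc k) mod p"
        using less.prems unfolding prec_p_def by blast
      then show "(s div p div p ^ k) mod p \<le> (t div p div p ^ k) mod p"
        by (simp add: div_mult2_eq)
    qed
    have lt: "s div p < s" using False assms(1) by simp
    have IH: "s div p \<le> t div p" using less.IH[OF lt pd] .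
    have md: "s mod p \<le> t mod p" using less.prems unfolding prec_p_def
      by (metis div_by_1 power_0)
    have "s = p * (s div p) + s mod p" by simp
    also have "\<dots> \<le> p * (t div p) + t mod p" using IH md by (intro add_mono mult_left_mono) simp_all
    also have "\<dots> = t" by simp
    finally show ?thesis .
  qed simp
qed

lemma prec_2_1_2: "\<not> prec_p 2 1 2"
proof
  assume "prec_p 2 1 2"
  then have "(1 div 2 ^ 0) mod 2 \<le> ((2::nat) div 2 ^ 0) mod 2" unfolding prec_p_def by blast
  then show False by simp
qed

lemma lookup_shift: "Poly_Mapping.lookup (shift_monom i j s m) k =
   Poly_Mapping.lookup m k + (if k = i then s else 0) - (if k = j then s else 0)"
  unfolding shift_monom_def by (simp add: lookup_minus lookup_add lookup_single)

lemma shift01: "shift_monom 0 1 s (mon (a, b, c)) = mon (a + s, b - s, c)"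
  by (rule poly_mapping_eqI) (simp add: lookup_shift lookup_mon)
lemma shift02: "shift_monom 0 2 s (mon (a, b, c)) = mon (a + s, b, c - s)"
  by (rule poly_mapping_eqI) (simp add: lookup_shift lookup_mon)
lemma shift12: "shift_monom 1 2 s (mon (a, b, c)) = mon (a, b + s, c - s)"
  by (rule poly_mapping_eqI) (simp add: lookup_shift lookup_mon)

lemma small3: "(s::nat) \<le> 3 \<Longrightarrow> 0 < s \<Longrightarrow> s = 1 \<or> s = 2 \<or> s = 3" by arith

lemma pBorel_G8: "p_Borel 2 (gen_ideal 3 ((X :: monom \<Rightarrow> 'k::field mpoly) ` mon ` G8T))"
  unfolding p_Borel_def mingens_G8
proof (intro ballI allI impI)
  fix m i j s
  assume m: "m \<in> mon ` G8T" and ij: "i < j" and pr: "prec_p 2 s (Poly_Mapping.lookup m j)"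
  obtain a b c where t: "(a, b, c) \<in> G8T" "m = mon (a, b, c)" using m by auto
  have sle: "s \<le> Poly_Mapping.lookup m j" using prec_le[OF _ pr] by simp
  show "X (shift_monom i j s m) \<in> gen_ideal 3 ((X :: monom \<Rightarrow> 'k mpoly) ` mon ` G8T)"
  proof (cases "s = 0")
    case True
    then have "shift_monom i j s m = m" unfolding shift_monom_def by simp
    then show ?thesis using m by (simp add: X_in_gen_ideal)
  next
    case False
    have bnd: "a \<le> 3" "b \<le> 3" "c \<le> 3" using t(1) unfolding G8T_def by auto
    have "Poly_Mapping.lookup m j \<noteq> 0" using sle False by linarith
    then have "j < 3" using t(2) by (simp add: lookup_mon split: if_splits)
    then have j12: "(i = 0 \<and> j = 1) \<or> (i = 0 \<and> j = 2) \<or> (i = 1 \<and> j = 2)"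
      using ij by arith
    have not121: "\<not> (Poly_Mapping.lookup m j = 2 \<and> s = 1)" using pr prec_2_1_2 by auto
    have "shift_monom i j s m \<in> mon ` G8T"
    proof -
      { assume ij1: "i = 0" "j = 1"
        have sb: "s \<le> b" "\<not> (b = 2 \<and> s = 1)" using sle not121 ij1 t(2) by (simp_all add: lookup_mon)
        have "(a + s, b - s, c) \<in> G8T"
        proof -
          have "s = 1 \<or> s = 2 \<or> s = 3" using small3[of s] sb(1) bnd False by simp
          moreover have "s = 1 \<Longrightarrow> ?thesis" using t(1) sb unfolding G8T_def by auto
          moreover have "s = 2 \<Longrightarrow> ?thesis" using t(1) sb unfolding G8T_def by auto
          moreover have "s = 3 \<Longrightarrow> ?thesis" using t(1) sb unfolding G8T_def by auto
          ultimately show ?thesis by blast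
        qed
        then have ?thesis using ij1 t(2) shift01 by simp }
      moreover
      { assume ij1: "i = 0" "j = 2"
        have sb: "s \<le> c" "\<not> (c = 2 \<and> s = 1)" using sle not121 ij1 t(2) by (simp_all add: lookup_mon)
        have "(a + s, b, c - s) \<in> G8T"
        proof -
          have "s = 1 \<or> s = 2 \<or> s = 3" using small3[of s] sb(1) bnd False by simp
          moreover have "s = 1 \<Longrightarrow> ?thesis" using t(1) sb unfolding G8T_def by auto
          moreover have "s = 2 \<Longrightarrow> ?thesis" using t(1) sb unfolding G8T_def by auto
          moreover have "s = 3 \<Longrightarrow> ?thesis" using t(1) sb unfolding G8T_def by auto
          ultimately show ?thesis by blast
        qed
        then have ?thesis using ij1 t(2) shift02 by simp }
      moreover
      { assume ij1: "i = 1" "j = 2"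
        have sb: "s \<le> c" "\<not> (c = 2 \<and> s = 1)" using sle not121 ij1 t(2) by (simp_all add: lookup_mon)
        have "(a, b + s, c - s) \<in> G8T"
        proof -
          have "s = 1 \<or> s = 2 \<or> s = 3" using small3[of s] sb(1) bnd False by simp
          moreover have "s = 1 \<Longrightarrow> ?thesis" using t(1) sb unfolding G8T_def by auto
          moreover have "s = 2 \<Longrightarrow> ?thesis" using t(1) sb unfolding G8T_def by auto
          moreover have "s = 3 \<Longrightarrow> ?thesis" using t(1) sb unfolding G8T_def by auto
          ultimately show ?thesis by blast
        qed
        then have ?thesis using ij1 t(2) shift12 by simp }
      ultimately show ?thesis using j12 by blast
    qed
    then show ?thesis by (simp add: X_in_gen_ideal)
  qed
qed

definition S6T :: "triple set" where
  "S6T = {(0,1,2),(0,2,1),(1,0,2),(1,2,0),(2,0,1),(2,1,0)}"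

lemma ordering:
  assumes dist: "distinct ms" and st: "set ms = mon ` G8T"
  shows "\<exists>i0 ft. i0 < length ms \<and> 1 \<le> i0 \<and> ms ! i0 = mon ft \<and> ft \<in> S6T \<and>
     (\<forall>t\<in>S6T. t \<noteq> ft \<longrightarrow> mon t \<in> set (take i0 ms)) \<and>
     set (take i0 ms) \<subseteq> mon ` (G8T - {ft})"
proof -
  define K where "K = {k. k < length ms \<and> ms ! k \<in> mon ` S6T}"
  have S6G8: "S6T \<subseteq> G8T" unfolding S6T_def G8T_def by auto
  have idx: "\<And>t. t \<in> S6T \<Longrightarrow> \<exists>k. k \<in> K \<and> ms ! k = mon t"
  proof -
    fix t assume t: "t \<in> S6T"
    then have "mon t \<in> set ms" using st S6G8 by blast
    then obtain k where "k < length ms" "ms ! k = mon t" by (auto simp: in_set_conv_nth)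
    then show "\<exists>k. k \<in> K \<and> ms ! k = mon t" unfolding K_def using t by auto
  qed
  have finK: "finite K" unfolding K_def by simp
  have neK: "K \<noteq> {}" using idx[of "(0,1,2)"] unfolding S6T_def by auto
  define i0 where "i0 = Max K"
  have i0K: "i0 \<in> K" unfolding i0_def using finK neK by simp
  have maxK: "\<And>k. k \<in> K \<Longrightarrow> k \<le> i0" unfolding i0_def using finK by simp
  obtain ft where ft: "ft \<in> S6T" "ms ! i0 = mon ft" using i0K unfolding K_def by blast
  have i0l: "i0 < length ms" using i0K unfolding K_def by simp
  have before: "\<forall>t\<in>S6T. t \<noteq> ft \<longrightarrow> mon t \<in> set (take i0 ms)"
  proof (intro ballI impI)
    fix t assume t: "t \<in> S6T" "t \<noteq> ft"
    obtain k where k: "k \<in> K" "ms ! k = mon t" using idx[OF t(1)] by blast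
    have "k \<noteq> i0"
    proof
      assume "k = i0"
      then have "mon t = mon ft" using k(2) ft(2) by simp
      then show False using t(2) by (simp add: mon_inj)
    qed
    then have ki: "k < i0" using maxK[OF k(1)] by simp
    have "take i0 ms ! k = ms ! k" using ki by simp
    moreover have "k < length (take i0 ms)" using ki i0l by simp
    then have "take i0 ms ! k \<in> set (take i0 ms)" by (rule nth_mem)
    ultimately show "mon t \<in> set (take i0 ms)" using k(2) by simp
  qed
  have i01: "1 \<le> i0"
  proof -
    obtain t where t: "t \<in> S6T" "t \<noteq> ft" using ft(1) unfolding S6T_def by auto
    then have m: "mon t \<in> set (take i0 ms)" using before by blast
    show ?thesis
    proof (rule ccontr)
      assume "\<not> 1 \<le> i0"
      then have "i0 = 0" by simp
      then show False using m by simp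
    qed
  qed
  have notin: "ms ! i0 \<notin> set (take i0 ms)"
  proof
    assume "ms ! i0 \<in> set (take i0 ms)"
    then obtain k where k: "k < length (take i0 ms)" "take i0 ms ! k = ms ! i0" by (auto simp: in_set_conv_nth)
    then have ki: "k < i0" and e: "ms ! k = ms ! i0" by auto
    have "k = i0" using nth_eq_iff_index_eq[OF dist, of k i0] e ki i0l by simp
    then show False using ki by simp
  qed
  have sub: "set (take i0 ms) \<subseteq> mon ` (G8T - {ft})"
  proof
    fix x assume x: "x \<in> set (take i0 ms)"
    have "x \<in> set ms" using x in_set_takeD by fast
    then have "x \<in> mon ` G8T" using st by simp
    moreover have "x \<noteq> mon ft" using x notin ft(2) by auto
    ultimately show "x \<in> mon ` (G8T - {ft})" by auto
  qed
  show ?thesis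
    by (rule exI[of _ i0], rule exI[of _ ft]) (intro conjI i0l i01 ft before sub)
qed

lemma caseA:
  assumes "P \<subseteq> mon ` (G8T - {(0,1,2)})" "finite P" "mon (0,2,1) \<in> P" "mon (1,0,2) \<in> P"
  shows "\<forall>bF dF bG dG phi.
              min_free_res 3 (colon 3 (gen_ideal 3 ((X :: monom \<Rightarrow> 'k::field mpoly) ` P)) (X (mon (0,1,2)) :: 'k mpoly)) bF dF \<and>
              min_free_res 3 (gen_ideal 3 ((X :: monom \<Rightarrow> 'k mpoly) ` P)) bG dG \<and>
              lifts_mult 3 (X (mon (0,1,2)) :: 'k mpoly) bF dF bG dG phi \<longrightarrow>
              \<not> min_free_res 3 I2 (cone_rank bF bG) (cone_diff bF dF bG dG phi)"
  by (rule case_lemma[OF assms, where CT="{(0,2,1),(1,2,0)}" and Lt="(1,2,2)" and uat="(0,0,1)" and vat="(0,1,0)" and wat="(1,0,0)"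
        and ubt="(0,1,0)" and vbt="(1,0,0)" and wbt="(0,1,0)" and kat="(1,0,1)" and kbt="(0,2,0)"])
     (simp_all add: G8T_def tdvd_def tmax_def mon_add mon_zero_iff mon_eq insert_Diff_if)

lemma caseB:
  assumes "P \<subseteq> mon ` (G8T - {(0,2,1)})" "finite P" "mon (0,1,2) \<in> P" "mon (1,2,0) \<in> P"
  shows "\<forall>bF dF bG dG phi.
              min_free_res 3 (colon 3 (gen_ideal 3 ((X :: monom \<Rightarrow> 'k::field mpoly) ` P)) (X (mon (0,2,1)) :: 'k mpoly)) bF dF \<and>
              min_free_res 3 (gen_ideal 3 ((X :: monom \<Rightarrow> 'k mpoly) ` P)) bG dG \<and>
              lifts_mult 3 (X (mon (0,2,1)) :: 'k mpoly) bF dF bG dG phi \<longrightarrow>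
              \<not> min_free_res 3 I2 (cone_rank bF bG) (cone_diff bF dF bG dG phi)"
  by (rule case_lemma[OF assms, where CT="{(1,0,2),(0,1,2)}" and Lt="(1,2,2)" and uat="(0,1,0)" and vat="(0,0,1)" and wat="(1,0,0)"
        and ubt="(0,0,1)" and vbt="(1,0,0)" and wbt="(0,0,1)" and kat="(1,1,0)" and kbt="(0,0,2)"])
     (simp_all add: G8T_def tdvd_def tmax_def mon_add mon_zero_iff mon_eq insert_Diff_if)

lemma caseD:
  assumes "P \<subseteq> mon ` (G8T - {(1,0,2)})" "finite P" "mon (0,1,2) \<in> P" "mon (2,0,1) \<in> P"
  shows "\<forall>bF dF bG dG phi.
              min_free_res 3 (colon 3 (gen_ideal 3 ((X :: monom \<Rightarrow> 'k::field mpoly) ` P)) (X (mon (1,0,2)) :: 'k mpoly)) bF dF \<and>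
              min_free_res 3 (gen_ideal 3 ((X :: monom \<Rightarrow> 'k mpoly) ` P)) bG dG \<and>
              lifts_mult 3 (X (mon (1,0,2)) :: 'k mpoly) bF dF bG dG phi \<longrightarrow>
              \<not> min_free_res 3 I2 (cone_rank bF bG) (cone_diff bF dF bG dG phi)"
  by (rule case_lemma[OF assms, where CT="{(0,1,2)}" and Lt="(2,1,2)" and uat="(1,0,0)" and vat="(0,1,0)" and wat="(1,0,0)"
        and ubt="(0,0,1)" and vbt="(1,0,0)" and wbt="(0,1,0)" and kat="(2,0,0)" and kbt="(0,1,1)"])
     (simp_all add: G8T_def tdvd_def tmax_def mon_add mon_zero_iff mon_eq insert_Diff_if)

lemma caseE:
  assumes "P \<subseteq> mon ` (G8T - {(1,2,0)})" "finite P" "mon (0,2,1) \<in> P" "mon (2,1,0) \<in> P"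
  shows "\<forall>bF dF bG dG phi.
              min_free_res 3 (colon 3 (gen_ideal 3 ((X :: monom \<Rightarrow> 'k::field mpoly) ` P)) (X (mon (1,2,0)) :: 'k mpoly)) bF dF \<and>
              min_free_res 3 (gen_ideal 3 ((X :: monom \<Rightarrow> 'k mpoly) ` P)) bG dG \<and>
              lifts_mult 3 (X (mon (1,2,0)) :: 'k mpoly) bF dF bG dG phi \<longrightarrow>
              \<not> min_free_res 3 I2 (cone_rank bF bG) (cone_diff bF dF bG dG phi)"
  by (rule case_lemma[OF assms, where CT="{(0,2,1)}" and Lt="(2,2,1)" and uat="(1,0,0)" and vat="(0,0,1)" and wat="(1,0,0)"
        and ubt="(0,1,0)" and vbt="(1,0,0)" and wbt="(0,0,1)" and kat="(2,0,0)" and kbt="(0,1,1)"])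
     (simp_all add: G8T_def tdvd_def tmax_def mon_add mon_zero_iff mon_eq insert_Diff_if)

lemma caseF:
  assumes "P \<subseteq> mon ` (G8T - {(2,0,1)})" "finite P" "mon (1,0,2) \<in> P" "mon (2,1,0) \<in> P"
  shows "\<forall>bF dF bG dG phi.
              min_free_res 3 (colon 3 (gen_ideal 3 ((X :: monom \<Rightarrow> 'k::field mpoly) ` P)) (X (mon (2,0,1)) :: 'k mpoly)) bF dF \<and>
              min_free_res 3 (gen_ideal 3 ((X :: monom \<Rightarrow> 'k mpoly) ` P)) bG dG \<and>
              lifts_mult 3 (X (mon (2,0,1)) :: 'k mpoly) bF dF bG dG phi \<longrightarrow>
              \<not> min_free_res 3 I2 (cone_rank bF bG) (cone_diff bF dF bG dG phi)"
  by (rule case_lemma[OF assms, where CT="{(1,0,2),(0,1,2)}" and Lt="(2,1,2)" and uat="(1,0,0)" and vat="(0,0,1)" and wat="(0,1,0)"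
        and ubt="(0,0,1)" and vbt="(0,1,0)" and wbt="(0,0,1)" and kat="(1,1,0)" and kbt="(0,0,2)"])
     (simp_all add: G8T_def tdvd_def tmax_def mon_add mon_zero_iff mon_eq insert_Diff_if)

lemma caseH:
  assumes "P \<subseteq> mon ` (G8T - {(2,1,0)})" "finite P" "mon (1,2,0) \<in> P" "mon (2,0,1) \<in> P"
  shows "\<forall>bF dF bG dG phi.
              min_free_res 3 (colon 3 (gen_ideal 3 ((X :: monom \<Rightarrow> 'k::field mpoly) ` P)) (X (mon (2,1,0)) :: 'k mpoly)) bF dF \<and>
              min_free_res 3 (gen_ideal 3 ((X :: monom \<Rightarrow> 'k mpoly) ` P)) bG dG \<and>
              lifts_mult 3 (X (mon (2,1,0)) :: 'k mpoly) bF dF bG dG phi \<longrightarrow>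
              \<not> min_free_res 3 I2 (cone_rank bF bG) (cone_diff bF dF bG dG phi)"
  by (rule case_lemma[OF assms, where CT="{(0,2,1),(1,2,0)}" and Lt="(2,2,1)" and uat="(1,0,0)" and vat="(0,1,0)" and wat="(0,0,1)"
        and ubt="(0,1,0)" and vbt="(0,0,1)" and wbt="(0,1,0)" and kat="(1,0,1)" and kbt="(0,2,0)"])
     (simp_all add: G8T_def tdvd_def tmax_def mon_add mon_zero_iff mon_eq insert_Diff_if)


theorem proposition5p2:
  assumes "CHAR('k::field) = 2"
  shows "\<exists>(p::nat) (n::nat) (I :: 'k mpoly set).
     prime p \<and> CHAR('k) = p \<and> monomial_ideal n I \<and> p_Borel p I \<and>
     (\<forall>ms. distinct ms \<and> set ms = mingens I \<longrightarrow>
        (\<exists>i. 2 \<le> i \<and> i \<le> length ms \<and>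
           (\<forall>bF dF bG dG phi.
              min_free_res n (colon n (gen_ideal n ((X :: monom \<Rightarrow> 'k mpoly) ` set (take (i-1) ms))) (X (ms ! (i-1)) :: 'k mpoly)) bF dF \<and>
              min_free_res n (gen_ideal n ((X :: monom \<Rightarrow> 'k mpoly) ` set (take (i-1) ms))) bG dG \<and>
              lifts_mult n (X (ms ! (i-1)) :: 'k mpoly) bF dF bG dG phi \<longrightarrow>
              \<not> min_free_res n (gen_ideal n ((X :: monom \<Rightarrow> 'k mpoly) ` set (take i ms)))
                   (cone_rank bF bG) (cone_diff bF dF bG dG phi))))"
proof -
  define I where "I = gen_ideal 3 ((X :: monom \<Rightarrow> 'k mpoly) ` mon ` G8T)"
  have mono: "monomial_ideal 3 I"
    unfolding monomial_ideal_def I_def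
    by (rule exI[of _ "mon ` G8T"]) (auto simp: monom_in_mon)
  have pB: "p_Borel 2 I" unfolding I_def by (rule pBorel_G8)
  have ord: "\<forall>ms. distinct ms \<and> set ms = mingens I \<longrightarrow>
        (\<exists>i. 2 \<le> i \<and> i \<le> length ms \<and>
           (\<forall>bF dF bG dG phi.
              min_free_res 3 (colon 3 (gen_ideal 3 ((X :: monom \<Rightarrow> 'k mpoly) ` set (take (i-1) ms))) (X (ms ! (i-1)) :: 'k mpoly)) bF dF \<and>
              min_free_res 3 (gen_ideal 3 ((X :: monom \<Rightarrow> 'k mpoly) ` set (take (i-1) ms))) bG dG \<and>
              lifts_mult 3 (X (ms ! (i-1)) :: 'k mpoly) bF dF bG dG phi \<longrightarrow>
              \<not> min_free_res 3 (gen_ideal 3 ((X :: monom \<Rightarrow> 'k mpoly) ` set (take i ms)))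
                   (cone_rank bF bG) (cone_diff bF dF bG dG phi)))"
  proof (intro allI impI)
    fix ms :: "monom list"
    assume h: "distinct ms \<and> set ms = mingens I"
    have d: "distinct ms" using h by simp
    have st: "set ms = mon ` G8T" using h mingens_G8 unfolding I_def by metis
    obtain i0 ft where o: "i0 < length ms" "1 \<le> i0" "ms ! i0 = mon ft" "ft \<in> S6T"
        "\<forall>t\<in>S6T. t \<noteq> ft \<longrightarrow> mon t \<in> set (take i0 ms)"
        "set (take i0 ms) \<subseteq> mon ` (G8T - {ft})"
      using ordering[OF d st] by blast
    define P where "P = set (take i0 ms)"
    have finP: "finite P" unfolding P_def by simp
    have PS: "P \<subseteq> mon ` (G8T - {ft})" using o(6) unfolding P_def .
    have mem: "\<And>t. t \<in> S6T \<Longrightarrow> t \<noteq> ft \<Longrightarrow> mon t \<in> P" using o(5) unfolding P_def by blast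
    have S6: "(0,1,2) \<in> S6T" "(0,2,1) \<in> S6T" "(1,0,2) \<in> S6T" "(1,2,0) \<in> S6T" "(2,0,1) \<in> S6T" "(2,1,0) \<in> S6T"
      unfolding S6T_def by simp_all
    have inner: "\<forall>bF dF bG dG phi.
              min_free_res 3 (colon 3 (gen_ideal 3 ((X :: monom \<Rightarrow> 'k mpoly) ` P)) (X (mon ft) :: 'k mpoly)) bF dF \<and>
              min_free_res 3 (gen_ideal 3 ((X :: monom \<Rightarrow> 'k mpoly) ` P)) bG dG \<and>
              lifts_mult 3 (X (mon ft) :: 'k mpoly) bF dF bG dG phi \<longrightarrow>
              \<not> min_free_res 3 (gen_ideal 3 ((X :: monom \<Rightarrow> 'k mpoly) ` set (take (Suc i0) ms)))
                   (cone_rank bF bG) (cone_diff bF dF bG dG phi)"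
    proof -
      have "ft = (0,1,2) \<or> ft = (0,2,1) \<or> ft = (1,0,2) \<or> ft = (1,2,0) \<or> ft = (2,0,1) \<or> ft = (2,1,0)"
        using o(4) unfolding S6T_def by simp
      moreover have "ft = (0,1,2) \<Longrightarrow> ?thesis"
      proof -
        assume e: "ft = (0,1,2)"
        show ?thesis unfolding e by (rule caseA) (use PS finP mem S6 e in auto)
      qed
      moreover have "ft = (0,2,1) \<Longrightarrow> ?thesis"
      proof -
        assume e: "ft = (0,2,1)"
        show ?thesis unfolding e by (rule caseB) (use PS finP mem S6 e in auto)
      qed
      moreover have "ft = (1,0,2) \<Longrightarrow> ?thesis"
      proof -
        assume e: "ft = (1,0,2)"
        show ?thesis unfolding e by (rule caseD) (use PS finP mem S6 e in auto)
      qed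
      moreover have "ft = (1,2,0) \<Longrightarrow> ?thesis"
      proof -
        assume e: "ft = (1,2,0)"
        show ?thesis unfolding e by (rule caseE) (use PS finP mem S6 e in auto)
      qed
      moreover have "ft = (2,0,1) \<Longrightarrow> ?thesis"
      proof -
        assume e: "ft = (2,0,1)"
        show ?thesis unfolding e by (rule caseF) (use PS finP mem S6 e in auto)
      qed
      moreover have "ft = (2,1,0) \<Longrightarrow> ?thesis"
      proof -
        assume e: "ft = (2,1,0)"
        show ?thesis unfolding e by (rule caseH) (use PS finP mem S6 e in auto)
      qed
      ultimately show ?thesis by blast
    qed
    show "\<exists>i. 2 \<le> i \<and> i \<le> length ms \<and>
           (\<forall>bF dF bG dG phi.
              min_free_res 3 (colon 3 (gen_ideal 3 ((X :: monom \<Rightarrow> 'k mpoly) ` set (take (i-1) ms))) (X (ms ! (i-1)) :: 'k mpoly)) bF dF \<and>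
              min_free_res 3 (gen_ideal 3 ((X :: monom \<Rightarrow> 'k mpoly) ` set (take (i-1) ms))) bG dG \<and>
              lifts_mult 3 (X (ms ! (i-1)) :: 'k mpoly) bF dF bG dG phi \<longrightarrow>
              \<not> min_free_res 3 (gen_ideal 3 ((X :: monom \<Rightarrow> 'k mpoly) ` set (take i ms)))
                   (cone_rank bF bG) (cone_diff bF dF bG dG phi))"
    proof (rule exI[of _ "Suc i0"], intro conjI)
      show "2 \<le> Suc i0" using o(2) by simp
      show "Suc i0 \<le> length ms" using o(1) by simp
      show "\<forall>bF dF bG dG phi.
              min_free_res 3 (colon 3 (gen_ideal 3 ((X :: monom \<Rightarrow> 'k mpoly) ` set (take (Suc i0-1) ms))) (X (ms ! (Suc i0-1)) :: 'k mpoly)) bF dF \<and>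
              min_free_res 3 (gen_ideal 3 ((X :: monom \<Rightarrow> 'k mpoly) ` set (take (Suc i0-1) ms))) bG dG \<and>
              lifts_mult 3 (X (ms ! (Suc i0-1)) :: 'k mpoly) bF dF bG dG phi \<longrightarrow>
              \<not> min_free_res 3 (gen_ideal 3 ((X :: monom \<Rightarrow> 'k mpoly) ` set (take (Suc i0) ms)))
                   (cone_rank bF bG) (cone_diff bF dF bG dG phi)"
        using inner o(3) unfolding P_def by simp
    qed
  qed
  have "prime (2::nat)" by simp
  then show ?thesis using assms mono pB ord by blast
qed

end
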